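(* Let $\mathsf V$ be a class of monotone views and let $\mathcal D$ be a probabilistic database such that there exist two facts $f_1,f_2$, each of positive marginal probability in $\mathcal D$, that are mutually exclusive, i.e. $\Pr_{D\sim\mathcal D}(f_1\in D\text{ and }f_2\in D)=0$. Then $\mathcal D\notin\mathsf V(\mathsf{TI})$.
   Context: Fix a countably infinite universe $U$. Facts are $R(u_1,\dots,u_{\mathrm{ar}(R)})$ with $R$ from a finite schema and $u_i\in U$; instances are finite sets of facts. A probabilistic database (PDB) is a discrete probability space $(\mathbb D,P)$ with $\mathbb D$ a nonempty countable set of instances; the marginal probability of a fact $f$ is $\Pr_{D\sim\mathcal D}(f\in D)$. A PDB $\mathcal I$ is tuple-independent if for all pairwise distinct facts $f_1,\dots,f_k$, $\Pr(f_1\in I,\dots,f_k\in I)=\prod_i\Pr(f_i\in I)$; $\mathsf{TI}$ is the class of these. A view is a function $V$ from instances of an input schema to instances of an output schema; it is monotone if $D\subseteq D'$ implies $V(D)\subseteq V(D')$. The image of a PDB $(\mathbb D,P)$ under $V$ is the PDB on $V(\mathbb D)$ with $P'(\{D'\})=P(\{D:V(D)=D'\})$; $\mathsf V(\mathsf{TI})$ is the class of images of TI-PDBs under views from $\mathsf V$. *)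

theory Defs
  imports "HOL-Probability.Probability_Mass_Function" "HOL-Library.Countable"
begin

type_synonym ('r, 'u) fact = "'r \<times> 'u list"

definition schema :: "'r set \<Rightarrow> ('r \<Rightarrow> nat) \<Rightarrow> bool" where
  "schema S ar \<longleftrightarrow> finite S"

definition facts :: "'r set \<Rightarrow> ('r \<Rightarrow> nat) \<Rightarrow> ('r, 'u) fact set" where
  "facts S ar = {(R, us). R \<in> S \<and> length us = ar R}"

definition instances :: "'r set \<Rightarrow> ('r \<Rightarrow> nat) \<Rightarrow> ('r, 'u) fact set set" where
  "instances S ar = {D. finite D \<and> D \<subseteq> facts S ar}"

text \<open>A PDB over a schema: a discrete probability distribution (its support is
automatically countable) on instances of the schema.\<close>

definition pdb :: "'r set \<Rightarrow> ('r \<Rightarrow> nat) \<Rightarrow> ('r, 'u) fact set pmf \<Rightarrow> bool" where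
  "pdb S ar P \<longleftrightarrow> set_pmf P \<subseteq> instances S ar"

definition marginal :: "('r, 'u) fact set pmf \<Rightarrow> ('r, 'u) fact \<Rightarrow> real" where
  "marginal P f = measure_pmf.prob P {D. f \<in> D}"

definition tuple_independent :: "('r, 'u) fact set pmf \<Rightarrow> bool" where
  "tuple_independent P \<longleftrightarrow>
     (\<forall>F. finite F \<longrightarrow> measure_pmf.prob P {D. F \<subseteq> D} = (\<Prod>f\<in>F. marginal P f))"

definition TI :: "'r set \<Rightarrow> ('r \<Rightarrow> nat) \<Rightarrow> ('r, 'u) fact set pmf set" where
  "TI S ar = {P. pdb S ar P \<and> tuple_independent P}"

definition is_view ::
  "'r set \<Rightarrow> ('r \<Rightarrow> nat) \<Rightarrow> 's set \<Rightarrow> ('s \<Rightarrow> nat)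
     \<Rightarrow> (('r, 'u) fact set \<Rightarrow> ('s, 'u) fact set) \<Rightarrow> bool" where
  "is_view S1 ar1 S2 ar2 V \<longleftrightarrow> (\<forall>D \<in> instances S1 ar1. V D \<in> instances S2 ar2)"

definition monotone_view ::
  "'r set \<Rightarrow> ('r \<Rightarrow> nat) \<Rightarrow> 's set \<Rightarrow> ('s \<Rightarrow> nat)
     \<Rightarrow> (('r, 'u) fact set \<Rightarrow> ('s, 'u) fact set) \<Rightarrow> bool" where
  "monotone_view S1 ar1 S2 ar2 V \<longleftrightarrow> is_view S1 ar1 S2 ar2 V \<and>
     (\<forall>D \<in> instances S1 ar1. \<forall>D' \<in> instances S1 ar1. D \<subseteq> D' \<longrightarrow> V D \<subseteq> V D')"

definition image_pdb :: "('a \<Rightarrow> 'b) \<Rightarrow> 'a pmf \<Rightarrow> 'b pmf" where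
  "image_pdb V P = map_pmf V P"

definition views_of_TI ::
  "'r set \<Rightarrow> ('r \<Rightarrow> nat) \<Rightarrow> (('r, 'u) fact set \<Rightarrow> ('s, 'u) fact set) set
     \<Rightarrow> ('s, 'u) fact set pmf set" where
  "views_of_TI S1 ar1 Vs = {image_pdb V I | V I. V \<in> Vs \<and> I \<in> TI S1 ar1}"

end

theory Submission
  imports Defs
begin

theorem proposition6p5:
  fixes S1 :: "'r set" and ar1 :: "'r \<Rightarrow> nat"
    and S2 :: "'s set" and ar2 :: "'s \<Rightarrow> nat"
    and Vs :: "(('r, 'u::countable) fact set \<Rightarrow> ('s, 'u) fact set) set"
    and \<D> :: "('s, 'u) fact set pmf"
    and f1 f2 :: "('s, 'u) fact"
  assumes "infinite (UNIV :: 'u set)"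
    and "schema S1 ar1" and "schema S2 ar2"
    and "\<forall>V \<in> Vs. monotone_view S1 ar1 S2 ar2 V"
    and "pdb S2 ar2 \<D>"
    and "marginal \<D> f1 > 0" and "marginal \<D> f2 > 0"
    and "measure_pmf.prob \<D> {D. f1 \<in> D \<and> f2 \<in> D} = 0"
  shows "\<D> \<notin> views_of_TI S1 ar1 Vs"
proof
  assume "\<D> \<in> views_of_TI S1 ar1 Vs"
  then obtain V I where V: "V \<in> Vs" and I: "I \<in> TI S1 ar1" and DV: "\<D> = map_pmf V I"
    unfolding views_of_TI_def image_pdb_def by auto
  have mono: "\<And>D D'. D \<in> instances S1 ar1 \<Longrightarrow> D' \<in> instances S1 ar1 \<Longrightarrow> D \<subseteq> D' \<Longrightarrow> V D \<subseteq> V D'"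
    using assms(4) V unfolding monotone_view_def by (meson subsetD)
  have supp: "set_pmf I \<subseteq> instances S1 ar1" and ti: "tuple_independent I"
    using I unfolding TI_def pdb_def by auto
  have ex: "\<exists>D\<in>set_pmf I. f \<in> V D" if "marginal \<D> f > 0" for f
  proof (rule ccontr)
    assume "\<not> ?thesis"
    hence "set_pmf \<D> \<inter> {D. f \<in> D} = {}" using DV by auto
    hence "marginal \<D> f = 0" unfolding marginal_def by (simp add: measure_pmf_zero_iff)
    thus False using that by simp
  qed
  obtain D1 where D1: "D1 \<in> set_pmf I" "f1 \<in> V D1" using ex assms(6) by blast
  obtain D2 where D2: "D2 \<in> set_pmf I" "f2 \<in> V D2" using ex assms(7) by blast
  define F where "F = D1 \<union> D2"
  have finF: "finite F" using D1 D2 supp unfolding F_def instances_def by auto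
  have pos: "marginal I g > 0" if gF: "g \<in> F" for g
  proof -
    obtain E where E: "E \<in> set_pmf I" "g \<in> E" using gF D1 D2 unfolding F_def by auto
    have "set_pmf I \<inter> {D. g \<in> D} \<noteq> {}" using E by blast
    hence "marginal I g \<noteq> 0" unfolding marginal_def by (simp add: measure_pmf_zero_iff)
    moreover have "marginal I g \<ge> 0" unfolding marginal_def by simp
    ultimately show ?thesis by linarith
  qed
  have "measure_pmf.prob I {D. F \<subseteq> D} = (\<Prod>g\<in>F. marginal I g)"
    using ti finF unfolding tuple_independent_def by simp
  also have "\<dots> > 0" using pos by (simp add: prod_pos)
  finally have "measure_pmf.prob I {D. F \<subseteq> D} \<noteq> 0" by simp
  then obtain E where E: "E \<in> set_pmf I" "F \<subseteq> E"
    by (auto simp: measure_pmf_zero_iff)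
  have "V D1 \<subseteq> V E" by (rule mono) (use D1 E supp F_def in auto)
  moreover have "V D2 \<subseteq> V E" by (rule mono) (use D2 E supp F_def in auto)
  ultimately have "V E \<in> set_pmf \<D> \<inter> {D. f1 \<in> D \<and> f2 \<in> D}" using D1 D2 E DV by auto
  hence "measure_pmf.prob \<D> {D. f1 \<in> D \<and> f2 \<in> D} \<noteq> 0"
    by (auto simp: measure_pmf_zero_iff)
  thus False using assms(8) by simp
qed

end
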